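(* Let $f^*\in L^2(\mathcal D)$ with $\mathbb E_{x\sim\mathcal D}[f^*(x)^2]=1$. Let $f_{\mathrm{teacher}}$ be shrinkage-optimal with respect to $f^*$ and let $f_{\mathrm{student}}$ be any function with $\mathbb E_x[f_{\mathrm{student}}(x)^2]\le\mathbb E_x[f_{\mathrm{teacher}}(x)^2]$. With $\mathcal L_{TE}=\mathbb E_x[(f_{\mathrm{teacher}}-f^* )^2]$ and $\mathcal L_{ST}=\mathbb E_x[(f_{\mathrm{student}}-f^* )^2]$, $$\mathcal L_{ST}\ \ge\ \big(1-\sqrt{1-\mathcal L_{TE}}\big)^2\ \ge\ \frac14\,\mathcal L_{TE}^2 .$$
   Context: $\mathcal D$ is a probability distribution on an input space $\mathcal X$. Shrinkage optimality: given $\hat f,f_{\mathrm{train}}:\mathcal X\to\mathbb R$, $\hat f$ is shrinkage-optimal with respect to $f_{\mathrm{train}}$ if for every $0\le\alpha\le1$, $\mathbb E_x[(\hat f(x)-f_{\mathrm{train}}(x))^2]\le\mathbb E_x[(\alpha\hat f(x)-f_{\mathrm{train}}(x))^2]$. All functions are in $L^2(\mathcal D)$. *)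

theory Defs
  imports "HOL-Probability.Probability"
begin

definition L2_fun :: "'a measure \<Rightarrow> ('a \<Rightarrow> real) \<Rightarrow> bool" where
  "L2_fun M f \<longleftrightarrow> f \<in> borel_measurable M \<and> integrable M (\<lambda>x. (f x)\<^sup>2)"

definition shrinkage_optimal :: "'a measure \<Rightarrow> ('a \<Rightarrow> real) \<Rightarrow> ('a \<Rightarrow> real) \<Rightarrow> bool" where
  "shrinkage_optimal M fhat ftrain \<longleftrightarrow>
     (\<forall>\<alpha>::real. 0 \<le> \<alpha> \<and> \<alpha> \<le> 1 \<longrightarrow>
        (\<integral>x. (fhat x - ftrain x)\<^sup>2 \<partial>M) \<le> (\<integral>x. (\<alpha> * fhat x - ftrain x)\<^sup>2 \<partial>M))"

end

theory Submission
  imports Defs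
begin

lemma L2_prod_int:
  assumes "L2_fun M f" "L2_fun M g"
  shows "integrable M (\<lambda>x. f x * g x)"
proof (rule Bochner_Integration.integrable_bound[where f="\<lambda>x. ((f x)\<^sup>2 + (g x)\<^sup>2)/2"])
  show "integrable M (\<lambda>x. ((f x)\<^sup>2 + (g x)\<^sup>2)/2)"
    using assms unfolding L2_fun_def by auto
  show "(\<lambda>x. f x * g x) \<in> borel_measurable M" using assms unfolding L2_fun_def by auto
  show "AE x in M. norm (f x * g x) \<le> norm (((f x)\<^sup>2 + (g x)\<^sup>2)/2)"
  proof (rule AE_I2)
    fix x
    have "\<bar>f x * g x\<bar> \<le> ((f x)\<^sup>2 + (g x)\<^sup>2)/2"
      using sum_squares_bound[of "\<bar>f x\<bar>" "\<bar>g x\<bar>"] by (simp add: abs_mult)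
    then show "norm (f x * g x) \<le> norm (((f x)\<^sup>2 + (g x)\<^sup>2)/2)" by simp
  qed
qed

lemma L2_expand:
  assumes "L2_fun M f" "L2_fun M g"
  shows "(\<integral>x. (p * f x + q * g x)\<^sup>2 \<partial>M) =
     p\<^sup>2 * (\<integral>x. (f x)\<^sup>2 \<partial>M) + 2*p*q * (\<integral>x. f x * g x \<partial>M) + q\<^sup>2 * (\<integral>x. (g x)\<^sup>2 \<partial>M)"
proof -
  have i1: "integrable M (\<lambda>x. (f x)\<^sup>2)" "integrable M (\<lambda>x. (g x)\<^sup>2)"
    using assms unfolding L2_fun_def by auto
  have i2: "integrable M (\<lambda>x. f x * g x)" using L2_prod_int[OF assms] .
  have e: "(\<lambda>x. (p * f x + q * g x)\<^sup>2) = (\<lambda>x. p\<^sup>2 * (f x)\<^sup>2 + 2*p*q * (f x * g x) + q\<^sup>2 * (g x)\<^sup>2)"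
    by (auto simp: power2_eq_square algebra_simps)
  show ?thesis unfolding e using i1 i2 by simp
qed

theorem theorem4p5:
  fixes M :: "'a measure" and fstar fteacher fstudent :: "'a \<Rightarrow> real"
  assumes "prob_space M"
    and "L2_fun M fstar" and "L2_fun M fteacher" and "L2_fun M fstudent"
    and "(\<integral>x. (fstar x)\<^sup>2 \<partial>M) = 1"
    and "shrinkage_optimal M fteacher fstar"
    and "(\<integral>x. (fstudent x)\<^sup>2 \<partial>M) \<le> (\<integral>x. (fteacher x)\<^sup>2 \<partial>M)"
  shows "(\<integral>x. (fstudent x - fstar x)\<^sup>2 \<partial>M)
           \<ge> (1 - sqrt (1 - (\<integral>x. (fteacher x - fstar x)\<^sup>2 \<partial>M)))\<^sup>2
       \<and> (1 - sqrt (1 - (\<integral>x. (fteacher x - fstar x)\<^sup>2 \<partial>M)))\<^sup>2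
           \<ge> (1/4) * (\<integral>x. (fteacher x - fstar x)\<^sup>2 \<partial>M)\<^sup>2"
proof -
  define a where "a = (\<integral>x. (fteacher x)\<^sup>2 \<partial>M)"
  define b where "b = (\<integral>x. fteacher x * fstar x \<partial>M)"
  define s where "s = (\<integral>x. (fstudent x)\<^sup>2 \<partial>M)"
  define c where "c = (\<integral>x. fstudent x * fstar x \<partial>M)"
  have g: "(\<integral>x. (\<alpha> * fteacher x - fstar x)\<^sup>2 \<partial>M) = \<alpha>\<^sup>2 * a - 2*\<alpha>*b + 1" for \<alpha>
    using L2_expand[OF assms(3,2), of \<alpha> "-1"] assms(5) unfolding a_def b_def by simp
  have LT: "(\<integral>x. (fteacher x - fstar x)\<^sup>2 \<partial>M) = a - 2*b + 1"
    using g[of 1] by simp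
  have LS: "(\<integral>x. (fstudent x - fstar x)\<^sup>2 \<partial>M) = s - 2*c + 1"
    using L2_expand[OF assms(4,2), of 1 "-1"] assms(5) unfolding s_def c_def by simp
  have sh: "a - 2*b + 1 \<le> \<alpha>\<^sup>2 * a - 2*\<alpha>*b + 1" if "0 \<le> \<alpha>" "\<alpha> \<le> 1" for \<alpha>
    using assms(6) that unfolding shrinkage_optimal_def using g[of 1] g[of \<alpha>] by auto
  have a0: "a \<ge> 0" unfolding a_def by simp
  have s0: "s \<ge> 0" unfolding s_def by simp
  have b0: "a \<le> 2*b" using sh[of 0] by simp
  have ab: "a \<le> b"
  proof (rule ccontr)
    assume "\<not> a \<le> b"
    hence lt: "b < a" by simp
    with b0 a0 have ap: "a > 0" "b \<ge> 0" by auto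
    have "a - 2*b + 1 \<le> (b/a)\<^sup>2 * a - 2*(b/a)*b + 1"
      using sh[of "b/a"] ap lt by (simp add: divide_simps)
    also have "\<dots> = 1 - b\<^sup>2/a" using ap by (simp add: power2_eq_square field_simps)
    finally have "a*a - 2*b*a + b\<^sup>2 \<le> 0" using ap by (simp add: field_simps power2_eq_square)
    hence "(a-b)\<^sup>2 \<le> 0" by (simp add: power2_eq_square algebra_simps)
    with lt show False by simp
  qed
  have cs: "c\<^sup>2 \<le> s"
  proof -
    have "0 \<le> (\<integral>x. (1 * fstudent x + (-c) * fstar x)\<^sup>2 \<partial>M)" by simp
    also have "\<dots> = s - c\<^sup>2"
      using L2_expand[OF assms(4,2), of 1 "-c"] assms(5) unfolding s_def c_def
      by (simp add: power2_eq_square)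
    finally show ?thesis by simp
  qed
  have csq: "c \<le> sqrt s"
  proof -
    have "c \<le> sqrt (c\<^sup>2)" by simp
    also have "\<dots> \<le> sqrt s" using cs by (rule real_sqrt_le_mono)
    finally show ?thesis .
  qed
  define L where "L = a - 2*b + 1"
  have s1: "s \<le> 1 - L" using assms(7) ab unfolding L_def s_def[symmetric] a_def[symmetric] by simp
  have "L \<ge> 0" unfolding L_def LT[symmetric] by simp
  hence L0: "L \<ge> 0" "L \<le> 1" using ab b0 a0 unfolding L_def by auto
  have q1: "sqrt s \<le> sqrt (1 - L)" using s1 by simp
  have q2: "sqrt (1 - L) \<le> 1" using L0 by simp
  have part1: "s - 2*c + 1 \<ge> (1 - sqrt (1 - L))\<^sup>2"
  proof -
    have "s - 2*c + 1 \<ge> (1 - sqrt s)\<^sup>2"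
      using csq s0 by (simp add: power2_eq_square algebra_simps)
    moreover have "(1 - sqrt s)\<^sup>2 \<ge> (1 - sqrt (1 - L))\<^sup>2"
      using q1 q2 by (intro power_mono) auto
    ultimately show ?thesis by linarith
  qed
  have part2: "(1 - sqrt (1 - L))\<^sup>2 \<ge> (1/4) * L\<^sup>2"
  proof -
    have "sqrt (1 - L) \<le> 1 - L/2"
      using L0 by (intro real_le_lsqrt) (auto simp: power2_eq_square algebra_simps)
    hence "L/2 \<le> 1 - sqrt (1 - L)" by simp
    hence "(L/2)\<^sup>2 \<le> (1 - sqrt (1 - L))\<^sup>2" using L0 by (intro power_mono) auto
    thus ?thesis by (simp add: power2_eq_square)
  qed
  show ?thesis using part1 part2 unfolding LT LS L_def by simp
qed

end
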